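(* Let $X$ be a normed space with norm $\|\cdot\|$ and let $Y_\rho$ be a $\rho$-complete modular space associated with a convex modular $\rho$ satisfying the $\Delta_2$-condition with constant $\tau$ (i.e. $\rho(2u)\le\tau\rho(u)$ for all $u\in Y_\rho$). Let $\theta>0$ and $r>\log_2\!\left(\frac{\tau^3}{2}\right)$ be real numbers, and let $\phi: X\to Y_\rho$ be a mapping such that $$\rho\big(\phi(x+y-z)+\phi(x+z-y)+\phi(y+z-x)-\phi(x-y)-\phi(x-z)-\phi(z-y)-\phi(x)-\phi(y)-\phi(z)\big)\le\theta\left(\|x\|^r+\|y\|^r+\|z\|^r\right)$$ for all $x,y,z\in X$. Then there exists a unique quadratic mapping $h: X\to Y_\rho$ such that $$\rho(\phi(x)-h(x))\le\frac{3\theta\tau^2}{2\left(2^{r+1}-\tau^3\right)}\|x\|^r\quad\text{for all }x\in X.$$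
   Context: A convex modular on a vector space $Y$ is a functional $\rho: Y\to[0,\infty)$ such that for all $u,v\in Y$: (i) $\rho(u)=0$ iff $u=0$; (ii) $\rho(\lambda u)=\rho(u)$ for every scalar $\lambda$ with $|\lambda|=1$; (iii) $\rho(a u+b v)\le a\rho(u)+b\rho(v)$ whenever $a,b\ge 0$ and $a+b=1$. The associated modular space is $Y_\rho=\{u\in Y: \rho(\lambda u)\to 0 \text{ as } \lambda\to 0\}$. $\rho$ satisfies the $\Delta_2$-condition if there is $\tau>0$ with $\rho(2u)\le\tau\rho(u)$ for all $u\in Y_\rho$. A sequence $\{u_n\}$ in $Y_\rho$ is $\rho$-convergent to $u$ if $\rho(u_n-u)\to 0$; it is $\rho$-Cauchy if $\rho(u_n-u_m)\to0$ as $n,m\to\infty$; $Y_\rho$ is $\rho$-complete if every $\rho$-Cauchy sequence is $\rho$-convergent. A mapping $h: X\to Y_\rho$ is quadratic if $h(x+y)+h(x-y)=2h(x)+2h(y)$ for all $x,y\in X$. *)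

theory Defs
  imports "HOL-Analysis.Analysis"
begin

definition convex_modular :: "('b::real_vector \<Rightarrow> real) \<Rightarrow> bool" where
  "convex_modular \<rho> \<longleftrightarrow>
     (\<forall>u. 0 \<le> \<rho> u) \<and>
     (\<forall>u. \<rho> u = 0 \<longleftrightarrow> u = 0) \<and>
     (\<forall>u (l::real). \<bar>l\<bar> = 1 \<longrightarrow> \<rho> (l *\<^sub>R u) = \<rho> u) \<and>
     (\<forall>u v (a::real) b. 0 \<le> a \<and> 0 \<le> b \<and> a + b = 1 \<longrightarrow>
        \<rho> (a *\<^sub>R u + b *\<^sub>R v) \<le> a * \<rho> u + b * \<rho> v)"

definition modular_space :: "('b::real_vector \<Rightarrow> real) \<Rightarrow> 'b set" where
  "modular_space \<rho> = {u. ((\<lambda>l::real. \<rho> (l *\<^sub>R u)) \<longlongrightarrow> 0) (at 0)}"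

definition Delta2 :: "('b::real_vector \<Rightarrow> real) \<Rightarrow> real \<Rightarrow> bool" where
  "Delta2 \<rho> \<tau> \<longleftrightarrow> 0 < \<tau> \<and> (\<forall>u\<in>modular_space \<rho>. \<rho> (2 *\<^sub>R u) \<le> \<tau> * \<rho> u)"

definition rho_Cauchy :: "('b::real_vector \<Rightarrow> real) \<Rightarrow> (nat \<Rightarrow> 'b) \<Rightarrow> bool" where
  "rho_Cauchy \<rho> s \<longleftrightarrow> (\<forall>e>0. \<exists>N. \<forall>n\<ge>N. \<forall>m\<ge>N. \<rho> (s n - s m) < e)"

definition rho_converges :: "('b::real_vector \<Rightarrow> real) \<Rightarrow> (nat \<Rightarrow> 'b) \<Rightarrow> 'b \<Rightarrow> bool" where
  "rho_converges \<rho> s u \<longleftrightarrow> (\<lambda>n. \<rho> (s n - u)) \<longlonglongrightarrow> 0"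

definition rho_complete :: "('b::real_vector \<Rightarrow> real) \<Rightarrow> bool" where
  "rho_complete \<rho> \<longleftrightarrow>
     (\<forall>s. (\<forall>n. s n \<in> modular_space \<rho>) \<and> rho_Cauchy \<rho> s \<longrightarrow>
        (\<exists>u\<in>modular_space \<rho>. rho_converges \<rho> s u))"

definition quadratic_map :: "('a::real_vector \<Rightarrow> 'b::real_vector) \<Rightarrow> bool" where
  "quadratic_map h \<longleftrightarrow> (\<forall>x y. h (x + y) + h (x - y) = 2 *\<^sub>R h x + 2 *\<^sub>R h y)"

end

theory Submission
  imports Defs
begin


lemma sum_tele: "(\<Sum>i<m. f (Suc i) - f i) = f m - (f 0::'a::ab_group_add)"
  by (rule sum_lessThan_telescope)

lemma half_pow_powr: "((1/2::real)^n) powr r = ((1/2) powr r)^n"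
proof -
  have "((1/2::real)^n) powr r = ((1/2) powr real n) powr r" by (simp add: powr_realpow)
  also have "\<dots> = ((1/2) powr r) powr real n" by (simp add: powr_powr mult.commute)
  also have "\<dots> = ((1/2) powr r)^n" by (simp add: powr_realpow)
  finally show ?thesis .
qed

locale cm =
  fixes \<rho> :: "'b::real_vector \<Rightarrow> real" and \<tau> :: real
  assumes cmod: "convex_modular \<rho>" and D2: "Delta2 \<rho> \<tau>"
begin

lemma nonneg: "0 \<le> \<rho> u" using cmod unfolding convex_modular_def by auto
lemma eq0: "\<rho> u = 0 \<longleftrightarrow> u = 0" using cmod unfolding convex_modular_def by auto
lemma zero[simp]: "\<rho> 0 = 0" using eq0 by auto
lemma neg[simp]: "\<rho> (- u) = \<rho> u"
proof -
  have "\<rho> ((-1::real) *\<^sub>R u) = \<rho> u" using cmod unfolding convex_modular_def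
    by (metis abs_minus_cancel abs_one)
  thus ?thesis by simp
qed
lemma conv: "0 \<le> a \<Longrightarrow> 0 \<le> b \<Longrightarrow> a + b = 1 \<Longrightarrow> \<rho> (a *\<^sub>R u + b *\<^sub>R v) \<le> a * \<rho> u + b * \<rho> v"
  using cmod unfolding convex_modular_def by blast
lemma scale_le: assumes "0 \<le> t" "t \<le> 1" shows "\<rho> (t *\<^sub>R u) \<le> t * \<rho> u"
  using conv[of t "1 - t" u 0] assms by simp
lemma scale_abs: "\<bar>l\<bar> \<le> 1 \<Longrightarrow> \<rho> (l *\<^sub>R u) \<le> \<bar>l\<bar> * \<rho> u"
proof (cases "l \<ge> 0")
  case True
  assume "\<bar>l\<bar> \<le> 1" thus ?thesis using True scale_le[of l u] by simp
next
  case False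
  assume "\<bar>l\<bar> \<le> 1"
  hence "\<rho> ((-l) *\<^sub>R u) \<le> (-l) * \<rho> u" using False scale_le[of "-l" u] by simp
  moreover have "\<rho> ((-l) *\<^sub>R u) = \<rho> (l *\<^sub>R u)" using neg[of "l *\<^sub>R u"] by simp
  ultimately show ?thesis using False by simp
qed

lemma modsp: "modular_space \<rho> = UNIV"
proof -
  { fix u
    have "((\<lambda>l::real. \<rho> (l *\<^sub>R u)) \<longlongrightarrow> 0) (at 0)"
    proof (rule tendsto_sandwich[where f="\<lambda>_. 0" and h="\<lambda>l. \<bar>l\<bar> * \<rho> u"])
      show "\<forall>\<^sub>F l in at 0. 0 \<le> \<rho> (l *\<^sub>R u)" using nonneg by simp
      have "\<forall>\<^sub>F l in at (0::real). \<bar>l\<bar> < 1"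
        unfolding eventually_at by (intro exI[of _ 1]) (auto simp: dist_real_def)
      thus "\<forall>\<^sub>F l in at 0. \<rho> (l *\<^sub>R u) \<le> \<bar>l\<bar> * \<rho> u"
        by eventually_elim (rule scale_abs, simp)
      show "((\<lambda>l. \<bar>l\<bar> * \<rho> u) \<longlongrightarrow> 0) (at 0)"
        by (auto intro!: tendsto_eq_intros)
    qed simp }
  thus ?thesis unfolding modular_space_def by auto
qed

lemma tau_pos: "0 < \<tau>" using D2 unfolding Delta2_def by auto
lemma two: "\<rho> (2 *\<^sub>R u) \<le> \<tau> * \<rho> u" using D2 modsp unfolding Delta2_def by auto

lemma pow2: "\<rho> ((2^k) *\<^sub>R u) \<le> \<tau>^k * \<rho> u"
proof (induction k)
  case 0 then show ?case by simp
next
  case (Suc k)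
  have "\<rho> ((2^Suc k) *\<^sub>R u) = \<rho> (2 *\<^sub>R ((2^k) *\<^sub>R u))" by simp
  also have "\<dots> \<le> \<tau> * \<rho> ((2^k) *\<^sub>R u)" by (rule two)
  also have "\<dots> \<le> \<tau> * (\<tau>^k * \<rho> u)" using Suc tau_pos by simp
  finally show ?case by simp
qed

lemma pow4: "\<rho> ((4^k) *\<^sub>R u) \<le> \<tau>^(2*k) * \<rho> u"
  using pow2[of "2*k" u] by (simp add: power_mult)

lemma add: "\<rho> (u + v) \<le> \<tau> / 2 * (\<rho> u + \<rho> v)"
proof -
  have "\<rho> (u + v) = \<rho> ((1/2) *\<^sub>R (2 *\<^sub>R u) + (1/2) *\<^sub>R (2 *\<^sub>R v))" by simp
  also have "\<dots> \<le> 1/2 * \<rho> (2 *\<^sub>R u) + 1/2 * \<rho> (2 *\<^sub>R v)" by (rule conv) auto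
  also have "\<dots> \<le> 1/2 * (\<tau> * \<rho> u) + 1/2 * (\<tau> * \<rho> v)"
    using two[of u] two[of v] by linarith
  finally show ?thesis by (simp add: algebra_simps)
qed

lemma sum: "\<rho> (\<Sum>i<n. u i) \<le> (\<Sum>i<n. (1/2)^(i+1) * \<rho> ((2^(i+1)) *\<^sub>R u i))"
proof (induction n arbitrary: u)
  case 0 then show ?case by simp
next
  case (Suc n)
  have IH: "\<rho> (\<Sum>i<n. 2 *\<^sub>R u (Suc i)) \<le> (\<Sum>i<n. (1/2)^(i+1) * \<rho> ((2^(i+1)) *\<^sub>R (2 *\<^sub>R u (Suc i))))"
    using Suc.IH[of "\<lambda>i. 2 *\<^sub>R u (Suc i)"] .
  have "\<rho> (\<Sum>i<Suc n. u i) = \<rho> ((1/2) *\<^sub>R (2 *\<^sub>R u 0) + (1/2) *\<^sub>R (\<Sum>i<n. 2 *\<^sub>R u (Suc i)))"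
    unfolding sum.lessThan_Suc_shift by (simp add: scaleR_sum_right[symmetric])
  also have "\<dots> \<le> 1/2 * \<rho> (2 *\<^sub>R u 0) + 1/2 * \<rho> (\<Sum>i<n. 2 *\<^sub>R u (Suc i))" by (rule conv) auto
  also have "\<dots> \<le> 1/2 * \<rho> (2 *\<^sub>R u 0) + 1/2 * (\<Sum>i<n. (1/2)^(i+1) * \<rho> ((2^(i+1)) *\<^sub>R (2 *\<^sub>R u (Suc i))))"
    using IH by simp
  also have "\<dots> = (\<Sum>i<Suc n. (1/2)^(i+1) * \<rho> ((2^(i+1)) *\<^sub>R u i))"
    unfolding sum.lessThan_Suc_shift by (simp add: sum_distrib_left algebra_simps)
  finally show ?case .
qed

definition null :: "(nat \<Rightarrow> 'b) \<Rightarrow> bool" where "null s \<longleftrightarrow> (\<lambda>n. \<rho> (s n)) \<longlonglongrightarrow> 0"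

lemma null_add: "null s \<Longrightarrow> null t \<Longrightarrow> null (\<lambda>n. s n + t n)"
  unfolding null_def
proof -
  assume "(\<lambda>n. \<rho> (s n)) \<longlonglongrightarrow> 0" "(\<lambda>n. \<rho> (t n)) \<longlonglongrightarrow> 0"
  hence l: "(\<lambda>n. \<tau>/2 * (\<rho> (s n) + \<rho> (t n))) \<longlonglongrightarrow> 0"
    by (auto intro!: tendsto_eq_intros)
  show "(\<lambda>n. \<rho> (s n + t n)) \<longlonglongrightarrow> 0"
    apply (rule tendsto_sandwich[OF _ _ tendsto_const l])
     apply (intro always_eventually allI, simp add: nonneg)
    by (intro always_eventually allI, rule add)
qed

lemma null_neg: "null s \<Longrightarrow> null (\<lambda>n. - s n)" unfolding null_def by simp
lemma null_diff: "null s \<Longrightarrow> null t \<Longrightarrow> null (\<lambda>n. s n - t n)"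
  using null_add[of s "\<lambda>n. - t n"] null_neg[of t] by simp

lemma null_const: "null (\<lambda>n. u) \<Longrightarrow> u = 0"
  unfolding null_def using LIMSEQ_const_iff eq0 by blast

lemma scale12: assumes "1 \<le> s" "s \<le> 2" shows "\<rho> (s *\<^sub>R u) \<le> (2 - s + (s - 1) * \<tau>) * \<rho> u"
proof -
  have "(2 - s) *\<^sub>R u + (s - 1) *\<^sub>R (2 *\<^sub>R u) = ((2 - s) + (s - 1) * 2) *\<^sub>R u"
    by (simp only: scaleR_scaleR) (rule scaleR_add_left[symmetric])
  also have "((2 - s) + (s - 1) * 2) = s" by simp
  finally have "\<rho> (s *\<^sub>R u) = \<rho> ((2 - s) *\<^sub>R u + (s - 1) *\<^sub>R (2 *\<^sub>R u))"
    by simp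
  also have "\<dots> \<le> (2 - s) * \<rho> u + (s - 1) * \<rho> (2 *\<^sub>R u)" by (rule conv) (use assms in auto)
  also have "\<dots> \<le> (2 - s) * \<rho> u + (s - 1) * (\<tau> * \<rho> u)"
    using two[of u] assms by (simp add: mult_left_mono)
  finally show ?thesis by (simp add: algebra_simps)
qed

lemma lsc:
  assumes conv_a: "(\<lambda>n. \<rho> (a n - b)) \<longlonglongrightarrow> 0" and bd: "\<And>n. \<rho> (a n) \<le> M"
  shows "\<rho> b \<le> M"
proof -
  have M0: "0 \<le> M" using bd[of 0] nonneg[of "a 0"] by linarith
  have key: "\<rho> b \<le> M + (1/2)^k * (\<bar>\<tau>\<bar> * M)" if k: "k \<ge> 1" for k :: nat
  proof -
    define e :: real where "e = (1/2)^k"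
    have e0: "0 < e" unfolding e_def by simp
    obtain j where kj: "k = Suc j" using k by (cases k) auto
    have "(1/2::real)^j \<le> 1" by (simp add: power_le_one)
    hence e1: "e \<le> 1/2" unfolding e_def kj by simp
    define s where "s = 1 / (1 - e)"
    have s1: "1 \<le> s" and s2: "s \<le> 2" unfolding s_def using e0 e1 by (auto simp: field_simps)
    have es: "(1 - e) * s = 1" unfolding s_def using e1 by simp
    have ie: "inverse e = 2^k" unfolding e_def by (simp add: power_divide)
    have bound: "\<rho> b \<le> (1 - e) * ((2 - s + (s - 1) * \<tau>) * M) + e * (\<tau>^k * \<rho> (a n - b))" for n
    proof -
      have e2: "e * 2^k = 1" unfolding e_def by (simp flip: power_mult_distrib)
      have "(1 - e) *\<^sub>R (s *\<^sub>R a n) + e *\<^sub>R ((2^k) *\<^sub>R (b - a n)) = b"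
        by (simp only: scaleR_scaleR es e2) simp
      hence "b = (1 - e) *\<^sub>R (s *\<^sub>R a n) + e *\<^sub>R ((2^k) *\<^sub>R (b - a n))" by simp
      hence "\<rho> b \<le> (1 - e) * \<rho> (s *\<^sub>R a n) + e * \<rho> ((2^k) *\<^sub>R (b - a n))"
      proof -
        have "\<rho> ((1 - e) *\<^sub>R (s *\<^sub>R a n) + e *\<^sub>R ((2^k) *\<^sub>R (b - a n)))
           \<le> (1 - e) * \<rho> (s *\<^sub>R a n) + e * \<rho> ((2^k) *\<^sub>R (b - a n))"
          by (rule conv) (use e0 e1 in auto)
        thus ?thesis using \<open>b = _\<close> by simp
      qed
      also have "\<dots> \<le> (1 - e) * ((2 - s + (s - 1) * \<tau>) * M) + e * (\<tau>^k * \<rho> (b - a n))"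
      proof (rule add_mono)
        have "\<rho> (s *\<^sub>R a n) \<le> (2 - s + (s - 1) * \<tau>) * \<rho> (a n)" by (rule scale12[OF s1 s2])
        also have "\<dots> \<le> (2 - s + (s - 1) * \<tau>) * M"
          using bd[of n] s1 s2 tau_pos by (intro mult_left_mono) auto
        finally show "(1 - e) * \<rho> (s *\<^sub>R a n) \<le> (1 - e) * ((2 - s + (s - 1) * \<tau>) * M)"
          using e1 by (intro mult_left_mono) auto
        show "e * \<rho> ((2^k) *\<^sub>R (b - a n)) \<le> e * (\<tau>^k * \<rho> (b - a n))"
          using pow2 e0 by (intro mult_left_mono) auto
      qed
      also have "\<rho> (b - a n) = \<rho> (a n - b)" using neg[of "a n - b"] by simp
      finally show ?thesis .
    qed
    have lim: "(\<lambda>n. (1 - e) * ((2 - s + (s - 1) * \<tau>) * M) + e * (\<tau>^k * \<rho> (a n - b)))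
        \<longlonglongrightarrow> (1 - e) * ((2 - s + (s - 1) * \<tau>) * M) + e * (\<tau>^k * 0)"
      by (intro tendsto_intros conv_a)
    have "\<rho> b \<le> (1 - e) * ((2 - s + (s - 1) * \<tau>) * M)"
      using LIMSEQ_le_const[OF lim] bound by simp
    also have "(1 - e) * (2 - s + (s - 1) * \<tau>) = 1 - 2*e + e * \<tau>"
    proof -
      have "(1 - e) * (2 - s + (s - 1) * \<tau>) = 2 * (1 - e) - (1 - e) * s + ((1 - e) * s - (1 - e)) * \<tau>"
        by (simp add: algebra_simps)
      also have "\<dots> = 1 - 2*e + e * \<tau>" using es by simp
      finally show ?thesis .
    qed
    hence "(1 - e) * ((2 - s + (s - 1) * \<tau>) * M) = (1 - 2*e + e * \<tau>) * M"
      by (metis mult.assoc)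
    also have "\<dots> \<le> M + e * (\<bar>\<tau>\<bar> * M)"
    proof -
      have "e * \<tau> \<le> e * \<bar>\<tau>\<bar>" using e0 by (intro mult_left_mono) auto
      hence "1 - 2*e + e * \<tau> \<le> 1 + e * \<bar>\<tau>\<bar>" using e0 by linarith
      hence "(1 - 2*e + e * \<tau>) * M \<le> (1 + e * \<bar>\<tau>\<bar>) * M" using M0 by (rule mult_right_mono)
      thus ?thesis by (simp add: algebra_simps)
    qed
    finally show ?thesis unfolding e_def .
  qed
  have lim2: "(\<lambda>k. M + (1/2)^(Suc k) * (\<bar>\<tau>\<bar> * M)) \<longlonglongrightarrow> M + 0 * (\<bar>\<tau>\<bar> * M)"
    by (intro tendsto_intros LIMSEQ_Suc LIMSEQ_power_zero) auto
  have "\<rho> b \<le> M + (1/2)^(Suc k) * (\<bar>\<tau>\<bar> * M)" for k using key[of "Suc k"] by simp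
  hence "\<rho> b \<le> M + 0 * (\<bar>\<tau>\<bar> * M)" by (intro LIMSEQ_le_const[OF lim2]) auto
  thus ?thesis by simp
qed

end



definition DD :: "('a::real_vector \<Rightarrow> 'b::real_vector) \<Rightarrow> 'a \<Rightarrow> 'a \<Rightarrow> 'a \<Rightarrow> 'b" where
  "DD f x y z = f (x + y - z) + f (x + z - y) + f (y + z - x) - f (x - y) - f (x - z)
                 - f (z - y) - f x - f y - f z"

lemma sc3: "(3::real) *\<^sub>R (v::'a::real_vector) = v + v + v"
  using scaleR_add_left[of 2 1 v] by (simp add: scaleR_2)
lemma sc4: "(4::real) *\<^sub>R (v::'a::real_vector) = 3 *\<^sub>R v + v"
  using scaleR_add_left[of 3 1 v] by simp

locale hs = cm \<rho> \<tau> for \<rho> :: "'b::real_vector \<Rightarrow> real" and \<tau> +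
  fixes \<phi> :: "'a::real_normed_vector \<Rightarrow> 'b" and \<theta> r :: real
  assumes th: "\<theta> > 0" and rr: "\<tau>^3/2 < 2 powr r" and t2: "2 \<le> \<tau>"
    and Dphi: "\<And>x y z. \<rho> (DD \<phi> x y z) \<le> \<theta> * (norm x powr r + norm y powr r + norm z powr r)"
begin

definition "c = (1/2::real) powr r"
definition "B = 3 * \<theta> * \<tau>\<^sup>2 / (2 * (2 powr (r + 1) - \<tau> ^ 3))"
definition "S n x = (4::real)^n *\<^sub>R \<phi> ((1/2::real)^n *\<^sub>R x)"

lemma c_pos: "0 < c" unfolding c_def by simp
lemma c_eq: "c = 1 / 2 powr r" unfolding c_def by (simp add: powr_divide)
lemma q_lt: "\<tau>^3 * c / 2 < 1"
  using rr unfolding c_eq by (simp add: field_simps)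
lemma p_le: "\<tau>^2 * c \<le> \<tau>^3 * c / 2"
proof -
  have "\<tau>^2 * c * 2 \<le> \<tau>^2 * c * \<tau>" using t2 c_pos by (intro mult_left_mono) auto
  thus ?thesis by (simp add: power3_eq_cube power2_eq_square algebra_simps)
qed
lemma p_lt: "\<tau>^2 * c < 1" using p_le q_lt by linarith
lemma den_pos: "0 < 2 powr (r + 1) - \<tau> ^ 3"
  using rr by (simp add: powr_add)
lemma B_nonneg: "0 \<le> B" unfolding B_def using den_pos th by simp

lemma normh: "norm ((1/2::real)^n *\<^sub>R x) powr r = c^n * norm x powr r"
  unfolding c_def by (simp add: powr_mult half_pow_powr)

lemma phi0: "\<phi> 0 = 0"
proof -
  have "\<rho> (DD \<phi> 0 0 0) \<le> 0" using Dphi[of 0 0 0] by simp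
  moreover have "DD \<phi> 0 0 0 = - (3 *\<^sub>R \<phi> 0)" unfolding DD_def sc3 by (simp add: algebra_simps)
  ultimately have "\<rho> (- (3 *\<^sub>R \<phi> 0)) = 0" using nonneg[of "DD \<phi> 0 0 0"] by simp
  thus ?thesis using eq0 by simp
qed

lemma wbound: "\<rho> (\<phi> (2 *\<^sub>R z) - 4 *\<^sub>R \<phi> z) \<le> 3/2 * \<tau> * \<theta> * norm z powr r"
proof -
  have A: "\<rho> (\<phi> (2 *\<^sub>R z) - 3 *\<^sub>R \<phi> z - \<phi> (-z)) \<le> 2 * \<theta> * norm z powr r"
  proof -
    have "DD \<phi> z z 0 = \<phi> (2 *\<^sub>R z) - 3 *\<^sub>R \<phi> z - \<phi> (-z)"
      unfolding DD_def sc3 scaleR_2 by (simp add: phi0 algebra_simps)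
    thus ?thesis using Dphi[of z z 0] by simp
  qed
  have Bb: "\<rho> (\<phi> (-z) - \<phi> z) \<le> \<theta> * norm z powr r"
  proof -
    have "DD \<phi> z 0 0 = \<phi> (-z) - \<phi> z"
      unfolding DD_def by (simp add: phi0 algebra_simps)
    thus ?thesis using Dphi[of z 0 0] by simp
  qed
  have eq: "\<phi> (2 *\<^sub>R z) - 4 *\<^sub>R \<phi> z = (\<phi> (2 *\<^sub>R z) - 3 *\<^sub>R \<phi> z - \<phi> (-z)) + (\<phi> (-z) - \<phi> z)"
    unfolding sc4 by (simp add: algebra_simps)
  have "\<rho> (\<phi> (2 *\<^sub>R z) - 4 *\<^sub>R \<phi> z) \<le> \<tau>/2 * (\<rho> (\<phi> (2 *\<^sub>R z) - 3 *\<^sub>R \<phi> z - \<phi> (-z)) + \<rho> (\<phi> (-z) - \<phi> z))"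
    unfolding eq by (rule add)
  also have "\<dots> \<le> \<tau>/2 * (2 * \<theta> * norm z powr r + \<theta> * norm z powr r)"
    using A Bb tau_pos by (intro mult_left_mono) auto
  finally show ?thesis by (simp add: algebra_simps)
qed

end


context hs begin

lemma S0[simp]: "S 0 x = \<phi> x" unfolding S_def by simp

lemma geo: fixes q :: real assumes "0 \<le> q" "q < 1" shows "(\<Sum>i<k. q^i) \<le> 1 / (1 - q)"
proof -
  have "(\<Sum>i<k. q^i) = (1 - q^k) / (1 - q)" using assms sum_gp_strict[of q k] by simp
  also have "\<dots> \<le> 1 / (1 - q)" using assms by (intro divide_right_mono) auto
  finally show ?thesis .
qed

lemma BK: "3/2 * \<theta> * \<tau>^2 * N * (c/2) / (1 - \<tau>^3 * c / 2) = B * N"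
proof -
  have P: "0 < 2 powr r" by simp
  have d: "2 * 2 powr r - \<tau>^3 > 0" using den_pos by (simp add: powr_add)
  show ?thesis unfolding B_def c_eq using P d
    by (simp add: powr_add field_simps)
qed

lemma S_bound: "\<rho> (S k x - \<phi> x) \<le> B * norm x powr r"
proof -
  define N where "N = norm x powr r"
  have N0: "0 \<le> N" unfolding N_def by simp
  define w where "w i = 4 *\<^sub>R \<phi> ((1/2::real)^(Suc i) *\<^sub>R x) - \<phi> ((1/2::real)^i *\<^sub>R x)" for i
  define K where "K = 3/2 * \<theta> * \<tau>^2 * N * (c/2)"
  define q where "q = \<tau>^3 * c / 2"
  have K0: "0 \<le> K" unfolding K_def using th c_pos N0 by simp
  have q0: "0 \<le> q" unfolding q_def using c_pos tau_pos by simp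
  have q1: "q < 1" unfolding q_def by (rule q_lt)
  have tele: "S k x - \<phi> x = (\<Sum>i<k. (4^i) *\<^sub>R w i)"
  proof -
    have "(\<Sum>i<k. S (Suc i) x - S i x) = S k x - S 0 x" by (rule sum_lessThan_telescope)
    moreover have "S (Suc i) x - S i x = (4^i) *\<^sub>R w i" for i
      unfolding S_def w_def by (simp add: scaleR_right_diff_distrib)
    ultimately show ?thesis by simp
  qed
  have wb: "\<rho> (w i) \<le> 3/2 * \<tau> * \<theta> * (c^(Suc i) * N)" for i
  proof -
    define z where "z = (1/2::real)^(Suc i) *\<^sub>R x"
    have "2 *\<^sub>R z = (1/2::real)^i *\<^sub>R x" unfolding z_def by simp
    hence "w i = - (\<phi> (2 *\<^sub>R z) - 4 *\<^sub>R \<phi> z)" unfolding w_def z_def by simp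
    hence "\<rho> (w i) = \<rho> (\<phi> (2 *\<^sub>R z) - 4 *\<^sub>R \<phi> z)" by (simp only: neg)
    also have "\<dots> \<le> 3/2 * \<tau> * \<theta> * norm z powr r" by (rule wbound)
    also have "norm z powr r = c^(Suc i) * N" unfolding z_def N_def by (rule normh)
    finally show ?thesis .
  qed
  have "\<rho> (S k x - \<phi> x) \<le> (\<Sum>i<k. (1/2)^(i+1) * \<rho> ((2^(i+1)) *\<^sub>R ((4^i) *\<^sub>R w i)))"
    unfolding tele by (rule sum)
  also have "\<dots> \<le> (\<Sum>i<k. K * q^i)"
  proof (rule sum_mono)
    fix i
    have e: "(2::real)^(i+1) * 4^i = 2^(3*i+1)"
      by (simp add: power_add power_mult flip: power_mult_distrib)
    have "((2::real)^(i+1)) *\<^sub>R (((4::real)^i) *\<^sub>R w i) = ((2::real)^(3*i+1)) *\<^sub>R w i"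
      by (simp only: scaleR_scaleR e)
    hence "\<rho> ((2^(i+1)) *\<^sub>R ((4^i) *\<^sub>R w i)) = \<rho> ((2^(3*i+1)) *\<^sub>R w i)"
      by (simp only:)
    also have "\<dots> \<le> \<tau>^(3*i+1) * \<rho> (w i)" by (rule pow2)
    also have "\<dots> \<le> \<tau>^(3*i+1) * (3/2 * \<tau> * \<theta> * (c^(Suc i) * N))"
      using wb tau_pos by (intro mult_left_mono) auto
    finally have "(1/2)^(i+1) * \<rho> ((2^(i+1)) *\<^sub>R ((4^i) *\<^sub>R w i))
        \<le> (1/2)^(i+1) * (\<tau>^(3*i+1) * (3/2 * \<tau> * \<theta> * (c^(Suc i) * N)))"
      by (intro mult_left_mono) auto
    also have "\<dots> = K * q^i"
    proof -
      have tt: "(\<tau>^i)^3 = (\<tau>^3)^i" by (simp flip: power_mult add: mult.commute)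
      show ?thesis unfolding K_def q_def
        by (simp add: power_add power_mult power_mult_distrib power_divide field_simps tt power2_eq_square)
    qed
    finally show "(1/2)^(i+1) * \<rho> ((2^(i+1)) *\<^sub>R ((4^i) *\<^sub>R w i)) \<le> K * q^i" .
  qed
  also have "\<dots> = K * (\<Sum>i<k. q^i)" by (simp add: sum_distrib_left)
  also have "\<dots> \<le> K * (1 / (1 - q))" using geo[OF q0 q1] K0 by (intro mult_left_mono) auto
  also have "\<dots> = B * N" unfolding K_def q_def using BK[of N] by simp
  finally show ?thesis unfolding N_def .
qed

end



lemma DD_quad:
  fixes f :: "'a::real_vector \<Rightarrow> 'b::real_vector"
  assumes D0: "\<And>x y z. DD f x y z = 0"
  shows "quadratic_map f"
proof -
  have "DD f 0 0 0 = - (3 *\<^sub>R f 0)" unfolding DD_def sc3 by (simp add: algebra_simps)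
  hence f0: "f 0 = 0" using D0[of 0 0 0] by simp
  have ev: "f (- x) = f x" for x
  proof -
    have "DD f x 0 0 = f (-x) - f x" unfolding DD_def by (simp add: f0 algebra_simps)
    thus ?thesis using D0[of x 0 0] by simp
  qed
  show ?thesis unfolding quadratic_map_def
  proof (intro allI)
    fix x y
    have e1: "f (y - x) = f (x - y)" using ev[of "x - y"] by simp
    have "DD f x y 0 = f (x + y) + f (x - y) - (f x + f x + f y + f y)"
      unfolding DD_def using e1 ev[of y] by (simp add: f0 algebra_simps)
    hence "f (x + y) + f (x - y) = f x + f x + f y + f y" using D0[of x y 0] by simp
    thus "f (x + y) + f (x - y) = 2 *\<^sub>R f x + 2 *\<^sub>R f y" by (simp add: scaleR_2 algebra_simps)
  qed
qed

lemma quad_scale: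
  fixes g :: "'a::real_vector \<Rightarrow> 'b::real_vector"
  assumes q: "quadratic_map g"
  shows "g x = (4::real)^n *\<^sub>R g ((1/2::real)^n *\<^sub>R x)"
proof -
  have g0: "g 0 = 0"
  proof -
    have "g 0 + g 0 = 2 *\<^sub>R g 0 + 2 *\<^sub>R g 0" using q[unfolded quadratic_map_def, rule_format, of 0 0] by simp
    hence "2 *\<^sub>R g 0 = 0" by (simp add: scaleR_2)
    thus ?thesis by simp
  qed
  have g2: "g (2 *\<^sub>R u) = 4 *\<^sub>R g u" for u
  proof -
    have "g (u + u) + g (u - u) = 2 *\<^sub>R g u + 2 *\<^sub>R g u" using q[unfolded quadratic_map_def] by blast
    moreover have "(4::real) *\<^sub>R g u = g u + g u + g u + g u" by (simp only: sc4 sc3)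
    ultimately show ?thesis using g0 by (simp add: scaleR_2 algebra_simps)
  qed
  show ?thesis
  proof (induction n)
    case 0 then show ?case by simp
  next
    case (Suc n)
    have "(1/2::real)^n *\<^sub>R x = 2 *\<^sub>R ((1/2::real)^(Suc n) *\<^sub>R x)" by simp
    hence "g ((1/2::real)^n *\<^sub>R x) = 4 *\<^sub>R g ((1/2::real)^(Suc n) *\<^sub>R x)" using g2 by metis
    with Suc show ?case by (simp add: mult.commute)
  qed
qed

locale hsc = hs + assumes comp: "rho_complete \<rho>"
begin

lemma S_diff: assumes "n \<le> m"
  shows "S m x - S n x = (4::real)^n *\<^sub>R (S (m - n) ((1/2::real)^n *\<^sub>R x) - \<phi> ((1/2::real)^n *\<^sub>R x))"
proof -
  obtain d where m: "m = n + d" using assms le_Suc_ex by blast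
  show ?thesis unfolding m S_def by (simp add: power_add scaleR_right_diff_distrib mult.commute)
qed

lemma cb: assumes "n \<le> m" shows "\<rho> (S m x - S n x) \<le> B * norm x powr r * (\<tau>^2 * c)^n"
proof -
  let ?y = "(1/2::real)^n *\<^sub>R x"
  have "\<rho> (S m x - S n x) \<le> \<tau>^(2*n) * \<rho> (S (m - n) ?y - \<phi> ?y)"
    unfolding S_diff[OF assms] by (rule pow4)
  also have "\<dots> \<le> \<tau>^(2*n) * (B * (c^n * norm x powr r))"
    using S_bound[of "m - n" ?y] normh[of n x] tau_pos by (intro mult_left_mono) auto
  also have "\<dots> = B * norm x powr r * (\<tau>^2 * c)^n" by (simp add: power_mult power_mult_distrib)
  finally show ?thesis .
qed

lemma pc0: "(\<lambda>n. K * (\<tau>^2 * c)^n) \<longlonglongrightarrow> 0"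
proof -
  have "(\<lambda>n. K * (\<tau>^2 * c)^n) \<longlonglongrightarrow> K * 0"
    using p_lt c_pos by (intro tendsto_intros LIMSEQ_power_zero) auto
  thus ?thesis by simp
qed

lemma cauchy: "rho_Cauchy \<rho> (\<lambda>n. S n x)"
  unfolding rho_Cauchy_def
proof (intro allI impI)
  fix e :: real assume e: "e > 0"
  have "\<forall>\<^sub>F n in sequentially. B * norm x powr r * (\<tau>^2 * c)^n < e"
    using pc0[of "B * norm x powr r"] e by (rule order_tendstoD)
  then obtain N where N: "\<And>n. n \<ge> N \<Longrightarrow> B * norm x powr r * (\<tau>^2 * c)^n < e"
    unfolding eventually_sequentially by blast
  show "\<exists>N. \<forall>n\<ge>N. \<forall>m\<ge>N. \<rho> (S n x - S m x) < e"
  proof (intro exI allI impI)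
    fix n m assume nN: "n \<ge> N" and mN: "m \<ge> N"
    show "\<rho> (S n x - S m x) < e"
    proof (cases "m \<le> n")
      case True thus ?thesis using cb[OF True, of x] N[OF mN] by linarith
    next
      case False
      hence "\<rho> (S m x - S n x) < e" using cb[of n m x] N[OF nN] by linarith
      moreover have "\<rho> (S n x - S m x) = \<rho> (S m x - S n x)" using neg[of "S m x - S n x"] by simp
      ultimately show ?thesis by simp
    qed
  qed
qed

definition "h x = (SOME u. rho_converges \<rho> (\<lambda>n. S n x) u)"

lemma hconv: "(\<lambda>n. \<rho> (S n x - h x)) \<longlonglongrightarrow> 0"
proof -
  have "\<exists>u\<in>modular_space \<rho>. rho_converges \<rho> (\<lambda>n. S n x) u"
    using comp cauchy[of x] modsp unfolding rho_complete_def by blast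
  hence "rho_converges \<rho> (\<lambda>n. S n x) (h x)" unfolding h_def by (metis someI_ex)
  thus ?thesis unfolding rho_converges_def .
qed

lemma hbound: "\<rho> (\<phi> x - h x) \<le> B * norm x powr r"
proof (rule lsc[where a="\<lambda>n. \<phi> x - S n x"])
  show "(\<lambda>n. \<rho> (\<phi> x - S n x - (\<phi> x - h x))) \<longlonglongrightarrow> 0"
  proof -
    have "\<rho> (\<phi> x - S n x - (\<phi> x - h x)) = \<rho> (S n x - h x)" for n
      using neg[of "S n x - h x"] by simp
    thus ?thesis using hconv by simp
  qed
  show "\<rho> (\<phi> x - S n x) \<le> B * norm x powr r" for n
    using S_bound[of n x] neg[of "S n x - \<phi> x"] by simp
qed

lemma gnull: "null (\<lambda>n. h p - S n p)"
proof -
  have "null (\<lambda>n. S n p - h p)" unfolding null_def by (rule hconv)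
  from null_neg[OF this] show ?thesis by simp
qed

lemma Tnull: "null (\<lambda>n. DD (S n) x y z)"
proof -
  let ?s = "\<lambda>n. (1/2::real)^n"
  have eq: "DD (S n) x y z = (4::real)^n *\<^sub>R DD \<phi> (?s n *\<^sub>R x) (?s n *\<^sub>R y) (?s n *\<^sub>R z)" for n
    unfolding DD_def S_def by (simp add: scaleR_right_diff_distrib scaleR_add_right)
  have b: "\<rho> (DD (S n) x y z) \<le> \<theta> * (norm x powr r + norm y powr r + norm z powr r) * (\<tau>^2 * c)^n" for n
  proof -
    have "\<rho> (DD (S n) x y z) \<le> \<tau>^(2*n) * \<rho> (DD \<phi> (?s n *\<^sub>R x) (?s n *\<^sub>R y) (?s n *\<^sub>R z))"
      unfolding eq by (rule pow4)
    also have "\<dots> \<le> \<tau>^(2*n) * (\<theta> * (c^n * norm x powr r + c^n * norm y powr r + c^n * norm z powr r))"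
      using Dphi[of "?s n *\<^sub>R x" "?s n *\<^sub>R y" "?s n *\<^sub>R z", unfolded normh] tau_pos
      by (intro mult_left_mono) auto
    also have "\<dots> = \<theta> * (norm x powr r + norm y powr r + norm z powr r) * (\<tau>^2 * c)^n"
    proof -
      have tt: "(\<tau>^n)^2 = (\<tau>^2)^n" by (simp flip: power_mult add: mult.commute)
      show ?thesis by (simp add: power_mult power_mult_distrib algebra_simps tt)
    qed
    finally show ?thesis .
  qed
  show ?thesis unfolding null_def
    by (rule tendsto_sandwich[OF _ _ tendsto_const pc0[of "\<theta> * (norm x powr r + norm y powr r + norm z powr r)"]]) (auto intro!: always_eventually simp: nonneg b)
qed

lemma hD: "DD h x y z = 0"
proof -
  have n1: "null (\<lambda>n. DD (\<lambda>p. h p - S n p) x y z)"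
    unfolding DD_def by (intro null_add null_diff gnull)
  have "DD h x y z = DD (\<lambda>p. h p - S n p) x y z + DD (S n) x y z" for n
    unfolding DD_def by (simp add: algebra_simps)
  hence "null (\<lambda>n. DD h x y z)" using null_add[OF n1 Tnull[of x y z]] by simp
  thus ?thesis by (rule null_const)
qed

lemma hquad: "quadratic_map h" by (rule DD_quad) (rule hD)

lemma uniq:
  assumes q1: "quadratic_map g1" and q2: "quadratic_map g2"
    and b1: "\<And>x. \<rho> (\<phi> x - g1 x) \<le> B * norm x powr r"
    and b2: "\<And>x. \<rho> (\<phi> x - g2 x) \<le> B * norm x powr r"
  shows "g1 = g2"
proof -
 have "g1 x = g2 x" for x
 proof -
  let ?y = "\<lambda>n. (1/2::real)^n *\<^sub>R x"
  have bd: "\<rho> (g1 x - g2 x) \<le> \<tau> * B * norm x powr r * (\<tau>^2 * c)^n" for n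
  proof -
    have "g1 x - g2 x = (4::real)^n *\<^sub>R ((g1 (?y n) - \<phi> (?y n)) + (\<phi> (?y n) - g2 (?y n)))"
      using quad_scale[OF q1, of x n] quad_scale[OF q2, of x n] by (simp add: scaleR_right_diff_distrib)
    hence "\<rho> (g1 x - g2 x) \<le> \<tau>^(2*n) * \<rho> ((g1 (?y n) - \<phi> (?y n)) + (\<phi> (?y n) - g2 (?y n)))"
      using pow4 by simp
    also have "\<dots> \<le> \<tau>^(2*n) * (\<tau>/2 * (\<rho> (g1 (?y n) - \<phi> (?y n)) + \<rho> (\<phi> (?y n) - g2 (?y n))))"
      using add[of "g1 (?y n) - \<phi> (?y n)" "\<phi> (?y n) - g2 (?y n)"] tau_pos by (intro mult_left_mono) auto
    also have "\<dots> \<le> \<tau>^(2*n) * (\<tau>/2 * (B * (c^n * norm x powr r) + B * (c^n * norm x powr r)))"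
    proof -
      have "\<rho> (g1 (?y n) - \<phi> (?y n)) \<le> B * (c^n * norm x powr r)"
        using b1[of "?y n"] neg[of "\<phi> (?y n) - g1 (?y n)"] normh[of n x] by simp
      moreover have "\<rho> (\<phi> (?y n) - g2 (?y n)) \<le> B * (c^n * norm x powr r)"
        using b2[of "?y n"] normh[of n x] by simp
      ultimately have s: "\<rho> (g1 (?y n) - \<phi> (?y n)) + \<rho> (\<phi> (?y n) - g2 (?y n))
          \<le> B * (c^n * norm x powr r) + B * (c^n * norm x powr r)" by linarith
      show ?thesis using tau_pos by (intro mult_left_mono s) auto
    qed
    also have "\<dots> = \<tau> * B * norm x powr r * (\<tau>^2 * c)^n"
    proof -
      have tt: "(\<tau>^n)^2 = (\<tau>^2)^n" by (simp flip: power_mult add: mult.commute)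
      show ?thesis by (simp add: power_mult power_mult_distrib algebra_simps tt)
    qed
    finally show ?thesis .
  qed
  have "\<rho> (g1 x - g2 x) \<le> 0"
    using LIMSEQ_le_const[OF pc0[of "\<tau> * B * norm x powr r"]] bd by auto
  hence "\<rho> (g1 x - g2 x) = 0" using nonneg[of "g1 x - g2 x"] by linarith
  thus "g1 x = g2 x" using eq0 by simp
 qed
 thus ?thesis by auto
qed

end

theorem corollary3p2:
  fixes \<rho> :: "'b::real_vector \<Rightarrow> real"
    and \<phi> :: "'a::real_normed_vector \<Rightarrow> 'b"
    and \<tau> \<theta> r :: real
  assumes "convex_modular \<rho>"
    and "rho_complete \<rho>"
    and "Delta2 \<rho> \<tau>"
    and "\<theta> > 0"
    and "r > log 2 (\<tau> ^ 3 / 2)"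
    and "\<forall>x. \<phi> x \<in> modular_space \<rho>"
    and "\<forall>x y z. \<rho> (\<phi> (x + y - z) + \<phi> (x + z - y) + \<phi> (y + z - x) - \<phi> (x - y) - \<phi> (x - z)
                 - \<phi> (z - y) - \<phi> x - \<phi> y - \<phi> z)
               \<le> \<theta> * (norm x powr r + norm y powr r + norm z powr r)"
  shows "\<exists>!h. (\<forall>x. h x \<in> modular_space \<rho>) \<and> quadratic_map h \<and>
           (\<forall>x. \<rho> (\<phi> x - h x) \<le> 3 * \<theta> * \<tau>\<^sup>2 / (2 * (2 powr (r + 1) - \<tau> ^ 3)) * norm x powr r)"
proof -
  interpret cm \<rho> \<tau> using assms(1,3) by unfold_locales
  have rr: "\<tau>^3/2 < 2 powr r"
    using assms(5) tau_pos by (subst (asm) log_less_iff) auto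
  have Dphi: "\<And>x y z. \<rho> (DD \<phi> x y z) \<le> \<theta> * (norm x powr r + norm y powr r + norm z powr r)"
    using assms(7) unfolding DD_def by blast
  show ?thesis
  proof (cases "\<exists>u::'b. u \<noteq> 0")
    case True
    then obtain u :: 'b where u: "u \<noteq> 0" by blast
    have pu: "0 < \<rho> u" using nonneg[of u] eq0[of u] u by linarith
    have "\<rho> u = \<rho> ((1/2) *\<^sub>R (2 *\<^sub>R u))" by simp
    also have "\<dots> \<le> 1/2 * \<rho> (2 *\<^sub>R u)" by (rule scale_le) auto
    also have "\<dots> \<le> 1/2 * (\<tau> * \<rho> u)" using two[of u] by simp
    finally have t2: "2 \<le> \<tau>" using pu by (simp add: field_simps)
    interpret hsc \<rho> \<tau> \<phi> \<theta> r
      by unfold_locales (use assms(2,4) rr t2 Dphi in auto)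
    show ?thesis
    proof (rule ex1I[of _ h])
      show "(\<forall>x. h x \<in> modular_space \<rho>) \<and> quadratic_map h \<and>
           (\<forall>x. \<rho> (\<phi> x - h x) \<le> 3 * \<theta> * \<tau>\<^sup>2 / (2 * (2 powr (r + 1) - \<tau> ^ 3)) * norm x powr r)"
        using modsp hquad hbound unfolding B_def by auto
      fix g assume g: "(\<forall>x. g x \<in> modular_space \<rho>) \<and> quadratic_map g \<and>
           (\<forall>x. \<rho> (\<phi> x - g x) \<le> 3 * \<theta> * \<tau>\<^sup>2 / (2 * (2 powr (r + 1) - \<tau> ^ 3)) * norm x powr r)"
      show "g = h"
        by (rule uniq) (use g hquad hbound in \<open>auto simp: B_def\<close>)
    qed
  next
    case False
    hence all0: "\<And>v::'b. v = 0" by blast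
    have den: "0 < 2 powr (r + 1) - \<tau> ^ 3" using rr by (simp add: powr_add)
    show ?thesis
    proof (rule ex1I[of _ "\<lambda>_. 0"])
      show "(\<forall>x. (\<lambda>_. 0::'b) x \<in> modular_space \<rho>) \<and> quadratic_map (\<lambda>_. 0::'b) \<and>
           (\<forall>x. \<rho> (\<phi> x - (\<lambda>_. 0::'b) x) \<le> 3 * \<theta> * \<tau>\<^sup>2 / (2 * (2 powr (r + 1) - \<tau> ^ 3)) * norm x powr r)"
      proof (intro conjI allI)
        fix x :: 'a
        have "0 \<le> 3 * \<theta> * \<tau>\<^sup>2 / (2 * (2 powr (r + 1) - \<tau> ^ 3)) * norm x powr r"
          using den assms(4) by simp
        thus "\<rho> (\<phi> x - (\<lambda>_. 0::'b) x) \<le> 3 * \<theta> * \<tau>\<^sup>2 / (2 * (2 powr (r + 1) - \<tau> ^ 3)) * norm x powr r"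
          using all0[of "\<phi> x"] by simp
      qed (use modsp in \<open>auto simp: quadratic_map_def\<close>)
      fix g :: "'a \<Rightarrow> 'b" show "g = (\<lambda>_. 0)" using all0 by auto
    qed
  qed
qed

end
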